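(* Let $A\in\mathbb{R}^{n\times n}$, $G\in\mathbb{R}^{n\times n}$, $C\in\mathbb{R}^{p\times n}$, $H$ with $HH^{\top}>0$, $(A,G,C)$ controllable and observable, and $r\in\{1,\dots,n-1\}$ with $\mathrm{Re}(\lambda_r(A))>\mathrm{Re}(\lambda_{r+1}(A))$. Let $\bar U\in\mathcal{U}$, $A_{\bar U}=\bar U^{\top}A\bar U$, $C_{\bar U}=C\bar U$, $G_{\bar U}=\bar U^{\top}G$, let $\tilde R_{\bar U}\in\mathbb{R}^{r\times r}$ be the unique positive definite solution of $A_{\bar U}R+RA_{\bar U}^{\top}+G_{\bar U}G_{\bar U}^{\top}-RC_{\bar U}^{\top}(HH^{\top})^{-1}C_{\bar U}R=0$, and let $\tilde P_r=\bar U\tilde R_{\bar U}\bar U^{\top}$. Let $\sigma_1,\dots,\sigma_r$ be the eigenvalues of $A_{\bar U}-\tilde R_{\bar U}C_{\bar U}^{\top}(HH^{\top})^{-1}C_{\bar U}$. Then the eigenvalues of $A-\tilde P_rC^{\top}(HH^{\top})^{-1}C$ are $\sigma_1,\dots,\sigma_r,\lambda_{r+1}(A),\dots,\lambda_n(A)$.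
   Context: $\mathrm{St}(r,n):=\{X\in\mathbb{R}^{n\times r}\mid X^{\top}X=I_r\}$. Eigenvalues of $A$ are ordered as $\mathrm{Re}(\lambda_1(A))\ge\dots\ge\mathrm{Re}(\lambda_n(A))$ with multiplicity. $\Psi=[\psi_1,\dots,\psi_n]$ is an invertible matrix of unit-norm (generalized) eigenvectors of $A$ with $\Psi^{-1}A\Psi$ the Jordan form. $\mathcal{U}:=\{U\in\mathrm{St}(r,n)\mid \Psi^{-1}U=\begin{bsmallmatrix}K\\ O_{n-r,r}\end{bsmallmatrix}\text{ for some }K\in\mathbb{C}^{r\times r}\}$. *)

theory Defs
  imports "Jordan_Normal_Form.Jordan_Normal_Form" "Jordan_Normal_Form.DL_Rank"
    "Jordan_Normal_Form.Gauss_Jordan_Elimination"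
begin

text \<open>Matrix inverse (only used for invertible square matrices).\<close>
definition minv :: "'a :: field mat \<Rightarrow> 'a mat" where
  "minv M = the (mat_inverse M)"

definition pos_def_mat :: "nat \<Rightarrow> real mat \<Rightarrow> bool" where
  "pos_def_mat k M \<longleftrightarrow> M \<in> carrier_mat k k \<and> transpose_mat M = M \<and>
     (\<forall>x \<in> carrier_vec k. x \<noteq> 0\<^sub>v k \<longrightarrow> x \<bullet> (M *\<^sub>v x) > 0)"

text \<open>Kalman controllability matrix [G, AG, ..., A^(n-1) G] for A n x n, G n x m.\<close>
definition ctrb_mat :: "real mat \<Rightarrow> real mat \<Rightarrow> real mat" where
  "ctrb_mat A G = (let n = dim_row A; m = dim_col G in
     mat n (n * m) (\<lambda>(i, j). ((A ^\<^sub>m (j div m)) * G) $$ (i, j mod m)))"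

definition controllable :: "real mat \<Rightarrow> real mat \<Rightarrow> bool" where
  "controllable A G \<longleftrightarrow> vec_space.rank (dim_row A) (ctrb_mat A G :: real mat) = dim_row A"

text \<open>(C,A) observable iff (A^T, C^T) controllable (rank of [C; CA; ...; CA^(n-1)] is n).\<close>
definition observable :: "real mat \<Rightarrow> real mat \<Rightarrow> bool" where
  "observable A C \<longleftrightarrow> controllable (transpose_mat A) (transpose_mat C)"

definition cplx :: "real mat \<Rightarrow> complex mat" where
  "cplx M = map_mat complex_of_real M"

end

theory Submission
  imports Defs
begin


definition emb :: "nat \<Rightarrow> nat \<Rightarrow> 'a :: comm_ring_1 mat" where
  "emb n r = mat n r (\<lambda>(i,j). if i = j then 1 else 0)"

lemma emb_carrier[simp]: "emb n r \<in> carrier_mat n r" by (simp add: emb_def)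
lemma emb_dim[simp]: "dim_row (emb n r) = n" "dim_col (emb n r) = r" by (auto simp: emb_def)
lemma emb_index[simp]: "i < n \<Longrightarrow> j < r \<Longrightarrow> emb n r $$ (i,j) = (if i = j then 1 else 0)" by (auto simp: emb_def)

lemma emb_right: assumes X: "X \<in> carrier_mat m n" and rn: "r \<le> n"
  shows "X * emb n r = mat m r (\<lambda>(i,j). X $$ (i,j))"
proof (rule eq_matI)
  fix i j assume i: "i < dim_row (mat m r (\<lambda>(i,j). X $$ (i,j)))" and j: "j < dim_col (mat m r (\<lambda>(i,j). X $$ (i,j)))"
  hence "(X * emb n r) $$ (i,j) = (\<Sum>k<n. X $$ (i,k) * (if k = j then 1 else 0))"
    using X rn by (auto simp: scalar_prod_def emb_def lessThan_atLeast0 intro!: sum.cong)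
  also have "\<dots> = (\<Sum>k<n. if k = j then X $$ (i,k) else 0)" by (rule sum.cong, auto)
  also have "\<dots> = X $$ (i,j)" using j rn i by simp
  finally show "(X * emb n r) $$ (i,j) = mat m r (\<lambda>(i,j). X $$ (i,j)) $$ (i,j)" using i j by simp
qed (use X in auto)

lemma emb_leftT: assumes X: "X \<in> carrier_mat n m" and rn: "r \<le> n"
  shows "transpose_mat (emb n r) * X = mat r m (\<lambda>(i,j). X $$ (i,j))"
proof (rule eq_matI)
  fix i j assume i: "i < dim_row (mat r m (\<lambda>(i,j). X $$ (i,j)))" and j: "j < dim_col (mat r m (\<lambda>(i,j). X $$ (i,j)))"
  hence "(transpose_mat (emb n r) * X) $$ (i,j) = (\<Sum>k<n. (if i = k then 1 else 0) * X $$ (k,j))"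
    using X rn by (auto simp: scalar_prod_def emb_def lessThan_atLeast0 intro!: sum.cong)
  also have "\<dots> = (\<Sum>k<n. if k = i then X $$ (k,j) else 0)" by (rule sum.cong, auto)
  also have "\<dots> = X $$ (i,j)" using i rn by simp
  finally show "(transpose_mat (emb n r) * X) $$ (i,j) = mat r m (\<lambda>(i,j). X $$ (i,j)) $$ (i,j)" using i j by simp
qed (use X in auto)

lemma emb_left: assumes X: "X \<in> carrier_mat r m" and rn: "r \<le> n"
  shows "emb n r * X = mat n m (\<lambda>(i,j). if i < r then X $$ (i,j) else 0)"
proof (rule eq_matI)
  fix i j assume i: "i < dim_row (mat n m (\<lambda>(i,j). if i < r then X $$ (i,j) else 0))" and j: "j < dim_col (mat n m (\<lambda>(i,j). if i < r then X $$ (i,j) else 0))"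
  hence "(emb n r * X) $$ (i,j) = (\<Sum>k<r. (if i = k then 1 else 0) * X $$ (k,j))"
    using X rn by (auto simp: scalar_prod_def emb_def lessThan_atLeast0 intro!: sum.cong)
  also have "\<dots> = (\<Sum>k<r. if k = i then X $$ (k,j) else 0)" by (rule sum.cong, auto)
  also have "\<dots> = (if i < r then X $$ (i,j) else 0)" by simp
  finally show "(emb n r * X) $$ (i,j) = mat n m (\<lambda>(i,j). if i < r then X $$ (i,j) else 0) $$ (i,j)" using i j by simp
qed (use X in auto)

lemma emb_TT: assumes "r \<le> n" shows "transpose_mat (emb n r) * (emb n r :: 'a :: comm_ring_1 mat) = 1\<^sub>m r"
  by (subst emb_leftT[OF emb_carrier assms], rule eq_matI, insert assms, auto)

lemma ll_zero_emb: assumes T: "T \<in> carrier_mat n n" and rn: "r \<le> n"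
  and z: "\<And>i j. r \<le> i \<Longrightarrow> i < n \<Longrightarrow> j < r \<Longrightarrow> T $$ (i,j) = 0"
  shows "T * emb n r = emb n r * (transpose_mat (emb n r) * T * emb n r)"
proof -
  have 1: "transpose_mat (emb n r) * T = mat r n (\<lambda>(i,j). T $$ (i,j))" by (rule emb_leftT[OF T rn])
  have 2: "mat r n (\<lambda>(i,j). T $$ (i,j)) * emb n r = mat r r (\<lambda>(i,j). mat r n (\<lambda>(i,j). T $$ (i,j)) $$ (i,j))"
    by (rule emb_right[OF _ rn], simp)
  have 3: "mat r r (\<lambda>(i,j). mat r n (\<lambda>(i,j). T $$ (i,j)) $$ (i,j)) = mat r r (\<lambda>(i,j). T $$ (i,j))"
    using rn by (intro eq_matI, auto)
  have 4: "emb n r * mat r r (\<lambda>(i,j). T $$ (i,j)) = mat n r (\<lambda>(i,j). if i < r then mat r r (\<lambda>(i,j). T $$ (i,j)) $$ (i,j) else 0)"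
    by (rule emb_left[OF _ rn], simp)
  have 5: "T * emb n r = mat n r (\<lambda>(i,j). T $$ (i,j))" by (rule emb_right[OF T rn])
  show ?thesis unfolding 1 2 3 4 5 by (intro eq_matI, insert z, auto)
qed

lemma char_poly_block: assumes T: "(T :: 'a :: idom mat) \<in> carrier_mat n n" and rn: "k \<le> n"
  and z: "\<And>i j. k \<le> i \<Longrightarrow> i < n \<Longrightarrow> j < k \<Longrightarrow> T $$ (i,j) = 0"
  shows "char_poly T = char_poly (mat k k (\<lambda>(i,j). T $$ (i,j))) * char_poly (mat (n-k) (n-k) (\<lambda>(i,j). T $$ (i+k,j+k)))"
proof -
  let ?T1 = "mat k k (\<lambda>(i,j). T $$ (i,j))"
  let ?T4 = "mat (n-k) (n-k) (\<lambda>(i,j). T $$ (i+k,j+k))"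
  have eq: "char_poly_matrix T = four_block_mat (char_poly_matrix ?T1) (mat k (n-k) (\<lambda>(i,j). [:- T $$ (i,j+k):])) (0\<^sub>m (n-k) k) (char_poly_matrix ?T4)"
    by (rule eq_matI, insert T rn z, auto simp: char_poly_matrix_def)
  show ?thesis unfolding char_poly_def eq
    by (rule det_four_block_mat_lower_left_zero[of _ k _ "n-k"]) auto
qed

lemma minv_props: assumes M: "(M :: 'a :: field mat) \<in> carrier_mat k k" and d: "det M \<noteq> 0"
  shows "minv M \<in> carrier_mat k k" "M * minv M = 1\<^sub>m k" "minv M * M = 1\<^sub>m k"
proof -
  obtain B where "mat_inverse M = Some B"
  proof (cases "mat_inverse M")
    case None thus ?thesis using mat_inverse(1)[OF M None, of undefined] det_non_zero_imp_unit[OF M d, of undefined] by blast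
  qed auto
  from mat_inverse(2)[OF M this] this show "minv M \<in> carrier_mat k k" "M * minv M = 1\<^sub>m k" "minv M * M = 1\<^sub>m k"
    by (auto simp: minv_def)
qed

lemma cplx_mult: "X \<in> carrier_mat a b \<Longrightarrow> Y \<in> carrier_mat b c \<Longrightarrow> cplx (X * Y) = cplx X * cplx Y"
  unfolding cplx_def by (rule of_real_hom.mat_hom_mult)
lemma cplx_minus: "X \<in> carrier_mat a b \<Longrightarrow> Y \<in> carrier_mat a b \<Longrightarrow> cplx (X - Y) = cplx X - cplx Y"
  unfolding cplx_def by (rule eq_matI, auto)
lemma cplx_transpose: "cplx (transpose_mat X) = transpose_mat (cplx X)"
  unfolding cplx_def by auto
lemma cplx_carrier[simp]: "cplx X \<in> carrier_mat a b \<longleftrightarrow> X \<in> carrier_mat a b"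
  unfolding cplx_def by auto
lemma cplx_one: "cplx (1\<^sub>m k) = 1\<^sub>m k" unfolding cplx_def by (rule of_real_hom.mat_hom_one)


lemma massoc: assumes "dim_col A = dim_row B" "dim_col B = dim_row C" shows "A * B * C = A * (B * C)"
proof -
  have "B \<in> carrier_mat (dim_col A) (dim_col B)" "C \<in> carrier_mat (dim_col B) (dim_col C)"
    using assms by (auto intro: carrier_matI)
  thus ?thesis using assoc_mult_mat[OF carrier_mat_triv[of A]] by blast
qed
lemma cancel: fixes X Y Z :: "'a :: semiring_1 mat" shows "X * Y = 1\<^sub>m k \<Longrightarrow> dim_col X = dim_row Y \<Longrightarrow> dim_row Z = k \<Longrightarrow> X * (Y * Z) = Z"
proof -
  assume a: "X * Y = 1\<^sub>m k" "dim_col X = dim_row Y" "dim_row Z = k"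
  have "dim_col Y = k" using arg_cong[OF a(1), of dim_col] by simp
  hence "X * (Y * Z) = (X * Y) * Z" using a by (intro massoc[symmetric]) auto
  also have "\<dots> = Z" unfolding a(1) by (rule left_mult_one_mat'[OF a(3)])
  finally show ?thesis .
qed
lemma cplx_dim[simp]: "dim_row (cplx X) = dim_row X" "dim_col (cplx X) = dim_col X" by (auto simp: cplx_def)

theorem proposition8:
  fixes A G C H U R :: "real mat" and \<Psi> :: "complex mat"
    and n p q r :: nat and n_as :: "(nat \<times> complex) list" and lam :: "nat \<Rightarrow> complex"
  assumes A: "A \<in> carrier_mat n n" and G: "G \<in> carrier_mat n n"
    and C: "C \<in> carrier_mat p n" and H: "H \<in> carrier_mat p q"
    and HH: "pos_def_mat p (H * transpose_mat H)"
    and ctrb: "controllable A G" and obs: "observable A C"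
    and r: "1 \<le> r" "r < n"
    and Psi: "\<Psi> \<in> carrier_mat n n" "invertible_mat \<Psi>"
    and Psi_unit: "\<forall>j<n. (\<Sum>i<n. (cmod (\<Psi> $$ (i, j)))\<^sup>2) = 1"
    and Jordan: "minv \<Psi> * cplx A * \<Psi> = jordan_matrix n_as"
    and lam_diag: "\<forall>i<n. jordan_matrix n_as $$ (i, i) = lam i"
    and lam_sorted: "\<forall>i j. i \<le> j \<and> j < n \<longrightarrow> Re (lam j) \<le> Re (lam i)"
    and gap: "Re (lam (r - 1)) > Re (lam r)"
    and U: "U \<in> carrier_mat n r" "transpose_mat U * U = 1\<^sub>m r"
    and U_in: "\<forall>i j. r \<le> i \<and> i < n \<and> j < r \<longrightarrow> (minv \<Psi> * cplx U) $$ (i, j) = 0"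
    and R_pd: "pos_def_mat r R"
    and Ric: "(transpose_mat U * A * U) * R + R * transpose_mat (transpose_mat U * A * U)
              + (transpose_mat U * G) * transpose_mat (transpose_mat U * G)
              - R * transpose_mat (C * U) * minv (H * transpose_mat H) * (C * U) * R = 0\<^sub>m r r"
  shows "char_poly (cplx (A - (U * R * transpose_mat U) * transpose_mat C * minv (H * transpose_mat H) * C))
       = char_poly (cplx (transpose_mat U * A * U - R * transpose_mat (C * U) * minv (H * transpose_mat H) * (C * U)))
         * (\<Prod>i\<in>{r..<n}. [:- lam i, 1:])"
proof -
  define W where "W = minv (H * transpose_mat H)"
  have HHc: "H * transpose_mat H \<in> carrier_mat p p" using H by auto
  have dHH: "det (H * transpose_mat H) \<noteq> 0"
  proof
    assume "det (H * transpose_mat H) = 0"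
    then obtain v where v: "v \<in> carrier_vec p" "v \<noteq> 0\<^sub>v p" "(H * transpose_mat H) *\<^sub>v v = 0\<^sub>v p"
      using det_0_iff_vec_prod_zero[OF HHc] by auto
    have "v \<bullet> ((H * transpose_mat H) *\<^sub>v v) > 0" using HH v(1,2) unfolding pos_def_mat_def by blast
    thus False unfolding v(3) using v(1) by simp
  qed
  have Wc: "W \<in> carrier_mat p p" using minv_props[OF HHc dHH] by (simp add: W_def)
  have Rc: "R \<in> carrier_mat r r" using R_pd by (simp add: pos_def_mat_def)
  obtain B0 where "inverts_mat \<Psi> B0" "inverts_mat B0 \<Psi>" using Psi(2) unfolding invertible_mat_def by auto
  hence B0: "\<Psi> * B0 = 1\<^sub>m n" "B0 * \<Psi> = 1\<^sub>m (dim_row B0)" using Psi(1) by (auto simp: inverts_mat_def)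
  have "dim_col B0 = n" using arg_cong[OF B0(1), of dim_col] by simp
  moreover have "dim_row B0 = n" using arg_cong[OF B0(2), of dim_col] Psi(1) by simp
  ultimately have B0c: "B0 \<in> carrier_mat n n" by (auto intro: carrier_matI)
  have dPsi: "det \<Psi> \<noteq> 0" using det_mult[OF Psi(1) B0c] B0(1) det_one by auto
  define Pi where "Pi = minv \<Psi>"
  have Pic: "Pi \<in> carrier_mat n n" and PPi: "\<Psi> * Pi = 1\<^sub>m n" and PiP: "Pi * \<Psi> = 1\<^sub>m n"
    using minv_props[OF Psi(1) dPsi] by (auto simp: Pi_def)
  define J where "J = jordan_matrix n_as"
  have Jdef: "J = Pi * cplx A * \<Psi>" using Jordan by (simp add: J_def Pi_def)
  have Jc: "J \<in> carrier_mat n n" unfolding Jdef using Pic A Psi(1) by auto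
  have nJ: "sum_list (map fst n_as) = n" using Jc jordan_matrix_carrier[of n_as] unfolding J_def carrier_mat_def by auto
  have Jut: "\<And>i j. i < n \<Longrightarrow> j < i \<Longrightarrow> J $$ (i,j) = 0"
    using jordan_matrix_upper_triangular[of _ n_as] nJ unfolding J_def by auto
  define cA where "cA = cplx A"
  define cU where "cU = cplx U"
  define cUt where "cUt = transpose_mat cU"
  have cAc: "cA \<in> carrier_mat n n" and cUc: "cU \<in> carrier_mat n r" and cUtc: "cUt \<in> carrier_mat r n"
    using A U by (auto simp: cA_def cU_def cUt_def)
  have UtU: "cUt * cU = 1\<^sub>m r"
  proof -
    have "cplx (transpose_mat U * U) = cplx (transpose_mat U) * cplx U" by (rule cplx_mult, insert U, auto)
    thus ?thesis using U(2) by (simp add: cplx_one cplx_transpose cUt_def cU_def)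
  qed
  define Y where "Y = cplx (R * transpose_mat U * transpose_mat C * W * C)"
  have RUc: "R * transpose_mat U * transpose_mat C * W * C \<in> carrier_mat r n"
  proof -
    have "R * transpose_mat U \<in> carrier_mat r n" using Rc U by auto
    hence "R * transpose_mat U * transpose_mat C \<in> carrier_mat r p" using C by auto
    hence "R * transpose_mat U * transpose_mat C * W \<in> carrier_mat r p" using Wc by auto
    thus ?thesis using C by auto
  qed
  have Yc: "Y \<in> carrier_mat r n" using RUc unfolding Y_def by simp
  have F: "cplx (A - (U * R * transpose_mat U) * transpose_mat C * W * C) = cA - cU * Y"
  proof -
    have e: "(U * R * transpose_mat U) * transpose_mat C * W * C = U * (R * transpose_mat U * transpose_mat C * W * C)"
      using U Rc C Wc by (simp add: massoc)
    have c2: "cplx (U * (R * transpose_mat U * transpose_mat C * W * C)) = cU * Y"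
      unfolding cU_def Y_def by (rule cplx_mult, insert U RUc, auto)
    have c3: "U * (R * transpose_mat U * transpose_mat C * W * C) \<in> carrier_mat n n"
      using U RUc by auto
    show ?thesis unfolding e cA_def using cplx_minus[OF A c3] c2 by simp
  qed
  define Z where "Z = cUt * cA * cU - Y * cU"
  have Zc: "Z \<in> carrier_mat r r" unfolding Z_def using cUtc cAc cUc Yc by auto
  have Zdef: "cplx (transpose_mat U * A * U - R * transpose_mat (C * U) * W * (C * U)) = Z"
  proof -
    have e1: "R * transpose_mat (C * U) * W * (C * U) = (R * transpose_mat U * transpose_mat C * W * C) * U"
      using U Rc C Wc by (simp add: transpose_mult[OF C U(1)] massoc)
    have "cplx (transpose_mat U * A * U) = cplx (transpose_mat U * A) * cplx U"
      by (rule cplx_mult[of _ r n], insert U A, auto)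
    also have "cplx (transpose_mat U * A) = cplx (transpose_mat U) * cplx A"
      by (rule cplx_mult[of _ r n], insert U A, auto)
    finally have c1: "cplx (transpose_mat U * A * U) = cUt * cA * cU" unfolding cUt_def cA_def cU_def cplx_transpose .
    have c2: "cplx ((R * transpose_mat U * transpose_mat C * W * C) * U) = Y * cU"
      unfolding Y_def cU_def by (rule cplx_mult, insert U RUc, auto)
    have c3: "(R * transpose_mat U * transpose_mat C * W * C) * U \<in> carrier_mat r r"
      using U RUc by auto
    have c4: "transpose_mat U * A * U \<in> carrier_mat r r" using U A by auto
    show ?thesis unfolding Z_def e1 using cplx_minus[OF c4 c3] c1 c2 by simp
  qed
  have rn: "r \<le> n" using r by simp
  define E where "E = (emb n r :: complex mat)"
  have Ec: "E \<in> carrier_mat n r" by (simp add: E_def)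
  have ETE: "transpose_mat E * E = 1\<^sub>m r" unfolding E_def by (rule emb_TT[OF rn])
  define B where "B = Pi * cU"
  have Bc: "B \<in> carrier_mat n r" using Pic cUc by (simp add: B_def)
  define K where "K = mat r r (\<lambda>(i,j). B $$ (i,j))"
  have Kc: "K \<in> carrier_mat r r" by (simp add: K_def)
  have Bz: "B $$ (i,j) = 0" if "r \<le> i" "i < n" "j < r" for i j
  proof -
    have "(minv \<Psi> * cplx U) $$ (i, j) = 0" using U_in that by simp
    thus ?thesis unfolding B_def Pi_def cU_def .
  qed
  have BK: "B = E * K" unfolding E_def
    apply (subst emb_left[OF Kc rn])
    apply (rule eq_matI) using Bc Bz by (auto simp: K_def)
  have dims: "dim_row cA = n" "dim_col cA = n" "dim_row cU = n" "dim_col cU = r"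
    "dim_row cUt = r" "dim_col cUt = n" "dim_row \<Psi> = n" "dim_col \<Psi> = n" "dim_row Pi = n" "dim_col Pi = n"
    "dim_row J = n" "dim_col J = n" "dim_row E = n" "dim_col E = r" "dim_row K = r" "dim_col K = r"
    "dim_row Y = r" "dim_col Y = n" "dim_row Z = r" "dim_col Z = r" "dim_row B = n" "dim_col B = r"
    using cAc cUc cUtc Psi(1) Pic Jc Ec Kc Yc Zc Bc by auto
  have UPEK: "cU = \<Psi> * (E * K)"
  proof -
    have "cU = \<Psi> * (Pi * cU)" using dims by (simp add: cancel[OF PPi])
    thus ?thesis unfolding B_def[symmetric] BK .
  qed
  define Kinv where "Kinv = cUt * (\<Psi> * E)"
  have Kinvc: "Kinv \<in> carrier_mat r r" using cUtc Psi(1) Ec by (simp add: Kinv_def)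
  note dims = dims carrier_matD[OF Kinvc]
  have KinvK: "Kinv * K = 1\<^sub>m r"
  proof -
    have "Kinv * K = cUt * cU" unfolding Kinv_def UPEK using dims by (simp add: massoc)
    thus ?thesis using UtU by simp
  qed
  have KKinv: "K * Kinv = 1\<^sub>m r" by (rule mat_mult_left_right_inverse[OF Kinvc Kc KinvK])
  define J11 where "J11 = transpose_mat E * J * E"
  have JE: "J * E = E * J11" unfolding J11_def E_def
    by (rule ll_zero_emb[OF Jc rn], rule Jut, auto)
  have J11c: "J11 \<in> carrier_mat r r" using Ec Jc by (simp add: J11_def)
  note dims = dims carrier_matD[OF J11c]
  have JE': "J * (E * X) = E * (J11 * X)" if "dim_row X = r" for X
    using that dims J11c by (simp add: massoc[symmetric] JE) 
  have cAJ: "cA = \<Psi> * (J * Pi)"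
    unfolding Jdef cA_def[symmetric] using dims by (simp add: massoc cancel[OF PPi] PPi)
  have AU: "cA * cU = cU * (Kinv * (J11 * K))"
  proof -
    have "cA * cU = \<Psi> * (J * (E * K))" unfolding cAJ UPEK using dims by (simp add: massoc cancel[OF PiP])
    also have "\<dots> = \<Psi> * (E * (J11 * K))" using dims by (simp add: JE')
    also have "\<dots> = cU * (Kinv * (J11 * K))" unfolding UPEK using dims J11c by (simp add: massoc cancel[OF KKinv])
    finally show ?thesis .
  qed
  have UAU: "cUt * cA * cU = Kinv * (J11 * K)"
    using AU dims J11c Kinvc by (simp add: massoc cancel[OF UtU])
  have AU2: "cA * cU = cU * (cUt * cA * cU)" using AU UAU by simp
  define F where "F = cA - cU * Y"
  have Fc: "F \<in> carrier_mat n n" unfolding F_def by (rule minus_carrier_mat, insert cUc Yc, auto)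
  note dims = dims carrier_matD[OF Fc]
  have FU: "F * cU = cU * Z"
  proof -
    have "F * cU = cA * cU - cU * Y * cU" unfolding F_def
      by (rule minus_mult_distrib_mat[of _ n n], insert cAc cUc Yc, auto)
    also have "\<dots> = cU * (cUt * cA * cU) - cU * (Y * cU)" unfolding AU2 using dims by (simp add: massoc)
    also have "\<dots> = cU * Z" unfolding Z_def
      by (rule mult_minus_distrib_mat[symmetric, of _ n r], insert cUc cUtc cAc Yc, auto)
    finally show ?thesis .
  qed
  define T where "T = Pi * F * \<Psi>"
  have Tc: "T \<in> carrier_mat n n" using Pic Fc Psi(1) by (simp add: T_def)
  note dims = dims carrier_matD[OF Tc]
  have Tform: "T = J - E * (K * (Y * \<Psi>))"
  proof -
    have "T = Pi * cA * \<Psi> - Pi * (cU * Y) * \<Psi>" unfolding T_def F_def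
      using Pic cAc cUc Yc Psi(1) by (simp add: mult_minus_distrib_mat[of _ n n] minus_mult_distrib_mat[of _ n n])
    also have "Pi * (cU * Y) * \<Psi> = E * (K * (Y * \<Psi>))"
    proof -
      have PiU: "Pi * cU = E * K" using BK B_def by simp
      show ?thesis using dims PiU by (simp add: massoc[symmetric])
    qed
    finally show ?thesis unfolding Jdef cA_def .
  qed
  have Tlow: "T $$ (i,j) = J $$ (i,j)" if "r \<le> i" "i < n" "j < n" for i j
  proof -
    have KYc: "K * (Y * \<Psi>) \<in> carrier_mat r n" using Kc Yc Psi(1) by simp
    show ?thesis unfolding Tform E_def emb_left[OF KYc rn] using that Jc by simp
  qed
  have Tz: "T $$ (i,j) = 0" if "r \<le> i" "i < n" "j < r" for i j
    using Tlow[OF that(1,2)] Jut[OF that(2)] that by simp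
  define T11 where "T11 = transpose_mat E * T * E"
  have T11c: "T11 \<in> carrier_mat r r" using Ec Tc by (simp add: T11_def)
  note dims = dims carrier_matD[OF T11c]
  have TE: "T * E = E * T11" unfolding T11_def E_def
    by (rule ll_zero_emb[OF Tc rn], rule Tz, auto)
  have "E * (T11 * K) = E * (K * Z)"
  proof -
    have "E * (T11 * K) = T * B" unfolding BK using dims T11c Tc by (simp add: massoc[symmetric] TE)
    also have "\<dots> = Pi * (F * cU)" unfolding T_def B_def using dims Fc by (simp add: massoc cancel[OF PiP] cancel[OF PPi])
    also have "\<dots> = E * (K * Z)" unfolding FU using dims BK[unfolded B_def] by (simp add: massoc[symmetric])
    finally show ?thesis .
  qed
  hence "transpose_mat E * (E * (T11 * K)) = transpose_mat E * (E * (K * Z))" by simp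
  hence T11K: "T11 * K = K * Z" using dims T11c by (simp add: cancel[OF ETE])
  have T11eq: "T11 = K * Z * Kinv"
  proof -
    have "T11 = T11 * (K * Kinv)" using T11c by (simp add: KKinv)
    also have "\<dots> = K * Z * Kinv" using dims T11c Kinvc by (simp add: massoc[symmetric] T11K)
    finally show ?thesis .
  qed
  have sim1: "similar_mat T11 Z" unfolding similar_mat_def similar_mat_wit_def Let_def
    by (rule exI[of _ K], rule exI[of _ Kinv], insert T11c Zc Kc Kinvc KKinv KinvK T11eq, auto)
  have sim2: "similar_mat (cplx (A - (U * R * transpose_mat U) * transpose_mat C * W * C)) T"
    unfolding F[folded F_def] similar_mat_def similar_mat_wit_def Let_def
  proof (rule exI[of _ \<Psi>], rule exI[of _ Pi])
    have "F = \<Psi> * T * Pi" unfolding T_def using dims Fc by (simp add: massoc cancel[OF PPi] PPi)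
    thus "{F, T, \<Psi>, Pi} \<subseteq> carrier_mat (dim_row F) (dim_row F) \<and> \<Psi> * Pi = 1\<^sub>m (dim_row F) \<and> Pi * \<Psi> = 1\<^sub>m (dim_row F) \<and> F = \<Psi> * T * Pi"
      using Fc Tc Psi(1) Pic PPi PiP by auto
  qed
  have T11m: "mat r r (\<lambda>(i,j). T $$ (i,j)) = T11"
  proof -
    have "T11 = mat r n (\<lambda>(i,j). T $$ (i,j)) * emb n r" unfolding T11_def E_def emb_leftT[OF Tc rn] ..
    also have "\<dots> = mat r r (\<lambda>(i,j). mat r n (\<lambda>(i,j). T $$ (i,j)) $$ (i,j))" by (rule emb_right[OF _ rn], simp)
    also have "\<dots> = mat r r (\<lambda>(i,j). T $$ (i,j))" using rn by (intro eq_matI) auto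
    finally show ?thesis by simp
  qed
  define T22 where "T22 = mat (n-r) (n-r) (\<lambda>(i,j). T $$ (i+r,j+r))"
  have T22c: "T22 \<in> carrier_mat (n-r) (n-r)" by (simp add: T22_def)
  have T22ut: "upper_triangular T22" unfolding upper_triangular_def T22_def
    using Tlow Jut by auto
  have "char_poly T22 = (\<Prod>a\<leftarrow>diag_mat T22. [:- a, 1:])" by (rule char_poly_upper_triangular[OF T22c T22ut])
  also have "diag_mat T22 = map (\<lambda>i. lam (r + i)) [0..<n-r]"
    unfolding diag_mat_def T22_def using Tlow lam_diag J_def by (auto simp: add.commute)
  also have "(\<Prod>a\<leftarrow>map (\<lambda>i. lam (r + i)) [0..<n-r]. [:- a, 1:]) = (\<Prod>i\<in>{r..<n}. [:- lam i, 1:])"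
    by (simp add: prod.atLeastLessThan_shift_0[of _ r n] prod.distinct_set_conv_list[symmetric, of "[0..<n-r]"] o_def)
  finally have cp22: "char_poly T22 = (\<Prod>i\<in>{r..<n}. [:- lam i, 1:])" .
  have "char_poly (cplx (A - (U * R * transpose_mat U) * transpose_mat C * W * C)) = char_poly T"
    by (rule char_poly_similar[OF sim2])
  also have "\<dots> = char_poly T11 * char_poly T22"
    unfolding T22_def T11m[symmetric] by (rule char_poly_block[OF Tc rn Tz])
  also have "char_poly T11 = char_poly Z" by (rule char_poly_similar[OF sim1])
  finally show ?thesis unfolding W_def[symmetric] Zdef cp22 .
qed
end
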